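(* Let $A=[a_{ij}]$ be an $n\times n$ row-stochastic matrix with positive diagonal entries, and assume the smallest positive entry of $A$ is at least $\eta>0$. Let $w_{ij}$ be the $(i,j)$-th entry of $A^TA$. Let $(S^-,S^+)$ be a partition of $N=\{1,\dots,n\}$ into two disjoint sets. If $\sum_{i\in S^-,\,j\in S^+}w_{ij}>0$, then \[\sum_{i\in S^-,\,j\in S^+}w_{ij}\ge\frac\eta2.\]
   Context: A matrix is row-stochastic if it is nonnegative and each row sums to $1$. *)

theory Defs
  imports "HOL-Analysis.Analysis"
begin

definition row_stochastic :: "real ^ 'n ^ 'n \<Rightarrow> bool" where
  "row_stochastic A \<longleftrightarrow> (\<forall>i j. 0 \<le> A $ i $ j) \<and> (\<forall>i. (\<Sum>j\<in>UNIV. A $ i $ j) = 1)"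

end

theory Submission
  imports Defs
begin

theorem lemma2:
  fixes A :: "real ^ 'n ^ 'n" and \<eta> :: real and Sm Sp :: "'n set"
  assumes "row_stochastic A"
    and "\<forall>i. A $ i $ i > 0"
    and "\<eta> > 0"
    and "\<forall>i j. A $ i $ j > 0 \<longrightarrow> A $ i $ j \<ge> \<eta>"
    and "Sm \<union> Sp = UNIV" and "Sm \<inter> Sp = {}"
    and "(\<Sum>i\<in>Sm. \<Sum>j\<in>Sp. (transpose A ** A) $ i $ j) > 0"
  shows "(\<Sum>i\<in>Sm. \<Sum>j\<in>Sp. (transpose A ** A) $ i $ j) \<ge> \<eta> / 2"
proof -
  have nn: "\<And>i j. 0 \<le> A $ i $ j" and rs: "\<And>i. (\<Sum>j\<in>UNIV. A $ i $ j) = 1"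
    using assms(1) unfolding row_stochastic_def by auto
  define r where "r k = (\<Sum>i\<in>Sm. A $ k $ i)" for k
  have sp: "(\<Sum>j\<in>Sp. A $ k $ j) = 1 - r k" for k
  proof -
    have "(\<Sum>j\<in>UNIV. A $ k $ j) = (\<Sum>j\<in>Sm. A $ k $ j) + (\<Sum>j\<in>Sp. A $ k $ j)"
      using assms(5,6) sum.union_disjoint[of Sm Sp "\<lambda>j. A $ k $ j"] by simp
    then show ?thesis using rs[of k] unfolding r_def by simp
  qed
  have eq: "(\<Sum>i\<in>Sm. \<Sum>j\<in>Sp. (transpose A ** A) $ i $ j) = (\<Sum>k\<in>UNIV. r k * (1 - r k))"
  proof -
    have "(\<Sum>i\<in>Sm. \<Sum>j\<in>Sp. (transpose A ** A) $ i $ j)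
        = (\<Sum>i\<in>Sm. \<Sum>j\<in>Sp. \<Sum>k\<in>UNIV. A $ k $ i * A $ k $ j)"
      by (simp add: matrix_matrix_mult_def transpose_def)
    also have "\<dots> = (\<Sum>k\<in>UNIV. \<Sum>i\<in>Sm. \<Sum>j\<in>Sp. A $ k $ i * A $ k $ j)"
      by (subst sum.swap, rule sum.cong, simp, subst sum.swap, simp)
    also have "\<dots> = (\<Sum>k\<in>UNIV. r k * (1 - r k))"
    proof (rule sum.cong[OF refl])
      fix k
      show "(\<Sum>i\<in>Sm. \<Sum>j\<in>Sp. A $ k $ i * A $ k $ j) = r k * (1 - r k)"
      proof -
        have "(\<Sum>i\<in>Sm. \<Sum>j\<in>Sp. A $ k $ i * A $ k $ j) = (\<Sum>i\<in>Sm. A $ k $ i) * (\<Sum>j\<in>Sp. A $ k $ j)"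
          by (rule sum_product[symmetric])
        also have "\<dots> = r k * (1 - r k)" using sp[of k] r_def by simp
        finally show ?thesis .
      qed
    qed
    finally show ?thesis .
  qed
  have r0: "0 \<le> r k" for k unfolding r_def by (simp add: nn sum_nonneg)
  have r1: "0 \<le> 1 - r k" for k
  proof -
    have "0 \<le> (\<Sum>j\<in>Sp. A $ k $ j)" by (rule sum_nonneg) (simp add: nn)
    thus ?thesis using sp[of k] by simp
  qed
  have tnn: "0 \<le> r k * (1 - r k)" for k using r0 r1 by simp
  from assms(7) eq have "0 < (\<Sum>k\<in>UNIV. r k * (1 - r k))" by simp
  then obtain k where kp: "0 < r k * (1 - r k)"
    using sum_nonpos[of UNIV "\<lambda>k. r k * (1 - r k)"] by (meson not_le)
  have "r k \<noteq> 0" using kp by auto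
  then obtain i where i: "i \<in> Sm" "A $ k $ i \<noteq> 0" unfolding r_def using sum.neutral[of Sm "\<lambda>i. A $ k $ i"] by blast
  have "1 - r k \<noteq> 0" using kp by auto
  then obtain j where j: "j \<in> Sp" "A $ k $ j \<noteq> 0" unfolding sp[symmetric] using sum.neutral[of Sp "\<lambda>i. A $ k $ i"] by blast
  have "A $ k $ i \<ge> \<eta>" using i nn[of k i] assms(4) by (simp add: less_eq_real_def)
  moreover have "r k \<ge> A $ k $ i" unfolding r_def
    using i(1) nn by (intro member_le_sum) auto
  ultimately have ge1: "r k \<ge> \<eta>" by simp
  have "A $ k $ j \<ge> \<eta>" using j nn[of k j] assms(4) by (simp add: less_eq_real_def)
  moreover have "1 - r k \<ge> A $ k $ j" unfolding sp[symmetric]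
    using j(1) nn by (intro member_le_sum) auto
  ultimately have ge2: "1 - r k \<ge> \<eta>" by simp
  have "(r k - \<eta>) * (1 - r k - \<eta>) \<ge> 0" using ge1 ge2 by simp
  hence "r k * (1 - r k) \<ge> \<eta> - \<eta> * \<eta>" by (simp add: algebra_simps)
  moreover have "\<eta> - \<eta> * \<eta> \<ge> \<eta> / 2"
  proof -
    have "\<eta> \<le> 1/2" using ge1 ge2 by simp
    hence "\<eta> * \<eta> \<le> \<eta> * (1/2)" using assms(3) by (intro mult_left_mono) auto
    thus ?thesis by simp
  qed
  moreover have "r k * (1 - r k) \<le> (\<Sum>k\<in>UNIV. r k * (1 - r k))"
    by (rule member_le_sum) (use tnn in auto)
  ultimately show ?thesis using eq by linarith
qed

end
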